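(* Let $\alpha$ be a hinge angle with primary generating triple $(p,q,k)$. Then $$S_\alpha=\bigcup_{Q\in\{0,1,2,3\}}\{(2l+1)\,i^Q(p+qi)\ :\ l\in\mathbb N\},$$ where $\mathbb N=\{0,1,2,\dots\}$.
   Context: Identify $\mathbb Z^2$ with $\mathbb Z[i]$. Let $\mathcal H=\{w\in\mathbb C:\ \Re w\in\mathbb Z+\tfrac12\ \text{or}\ \Im w\in\mathbb Z+\tfrac12\}$. An angle $\alpha\in\mathbb R/2\pi\mathbb Z$ is a hinge angle if there exists $z\in\mathbb Z[i]$ with $ze^{i\alpha}\in\mathcal H$; its set of source points is $S_\alpha=\{z\in\mathbb Z[i]:\ e^{i\alpha}z\in\mathcal H\}$. For integers $p,q,k$ with $(k+\tfrac12)^2<p^2+q^2$, put $\lambda=\sqrt{p^2+q^2-(k+\tfrac12)^2}>0$ and let $\alpha(p,q,k)$ be the unique angle with $e^{i\alpha(p,q,k)}(p+qi)=k+\tfrac12+\lambda i$; such a triple is a generating triple of $\alpha$ if $\alpha(p,q,k)=\alpha$, and it is primary if it minimizes $p^2+q^2$ among the generating triples of $\alpha$ (it is unique). *)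

theory Defs
  imports Complex_Main
begin

definition gauss_int :: "complex \<Rightarrow> bool" where
  "gauss_int z \<longleftrightarrow> (\<exists>a b :: int. z = Complex (of_int a) (of_int b))"

definition hinge_set :: "complex set" where
  "hinge_set = {w. (\<exists>n::int. Re w = of_int n + 1/2) \<or> (\<exists>n::int. Im w = of_int n + 1/2)}"

text \<open>Angles in R/2piZ are represented by real numbers; only cis alpha matters.\<close>

definition source_points :: "real \<Rightarrow> complex set" where
  "source_points \<alpha> = {z. gauss_int z \<and> cis \<alpha> * z \<in> hinge_set}"

definition hinge_angle :: "real \<Rightarrow> bool" where
  "hinge_angle \<alpha> \<longleftrightarrow> (\<exists>z. gauss_int z \<and> cis \<alpha> * z \<in> hinge_set)"

definition triple_lambda :: "int \<Rightarrow> int \<Rightarrow> int \<Rightarrow> real" where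
  "triple_lambda p q k = sqrt (of_int (p^2 + q^2) - (of_int k + 1/2)^2)"

text \<open>(p,q,k) is admissible and alpha(p,q,k) = alpha (mod 2 pi), i.e.
  e^{i alpha}(p+qi) = k + 1/2 + lambda i.\<close>
definition generating_triple :: "real \<Rightarrow> int \<Rightarrow> int \<Rightarrow> int \<Rightarrow> bool" where
  "generating_triple \<alpha> p q k \<longleftrightarrow>
     (of_int k + 1/2)^2 < (of_int (p^2 + q^2) :: real) \<and>
     cis \<alpha> * Complex (of_int p) (of_int q) = Complex (of_int k + 1/2) (triple_lambda p q k)"

definition primary_triple :: "real \<Rightarrow> int \<Rightarrow> int \<Rightarrow> int \<Rightarrow> bool" where
  "primary_triple \<alpha> p q k \<longleftrightarrow> generating_triple \<alpha> p q k \<and>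
     (\<forall>p' q' k'. generating_triple \<alpha> p' q' k' \<longrightarrow> p^2 + q^2 \<le> p'^2 + q'^2)"

end

theory Submission imports Defs begin

lemma sq_mod4: "(t::int)^2 mod 4 = 0 \<or> t^2 mod 4 = 1"
proof (cases "even t")
  case True then obtain s where "t = 2*s" by blast
  then show ?thesis by (simp add: power2_eq_square)
next
  case False then obtain s where "t = 2*s+1" using oddE by blast
  then have "t^2 = 4*(s^2+s) + 1" by (simp add: power2_eq_square algebra_simps)
  moreover have "(4*x+1::int) mod 4 = 1" for x by presburger
  ultimately show ?thesis by (metis (no_types))
qed

lemma nosq: "(M::int) mod 4 = 3 \<Longrightarrow> t^2 = M * c^2 \<Longrightarrow> c = 0"
proof (induction "nat \<bar>c\<bar>" arbitrary: t c rule: less_induct)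
  case less
  show ?case
  proof (rule ccontr)
    assume c0: "c \<noteq> 0"
    show False
    proof (cases "even c")
      case True
      then obtain c' where c': "c = 2*c'" by blast
      have "t^2 = 4 * (M*c'^2)" using less.prems(2) c' by (simp add: power2_eq_square)
      then have "even (t^2)" by presburger
      then have "even t" by simp
      then obtain t' where t': "t = 2*t'" by blast
      have "t'^2 = M * c'^2" using less.prems(2) c' t' by (simp add: power2_eq_square)
      moreover have "nat \<bar>c'\<bar> < nat \<bar>c\<bar>" using c0 c' by simp
      ultimately have "c' = 0" using less.hyps less.prems(1) by blast
      then show False using c0 c' by simp
    next
      case False
      then obtain s where "c = 2*s+1" using oddE by blast
      then have "c^2 = 4*(s^2+s) + 1" by (simp add: power2_eq_square algebra_simps)
      then have "(M*c^2) mod 4 = 3" using less.prems(1)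
        by (metis add.commute mod_mult_right_eq mod_mult_self2 mult.right_neutral mod_add_self1)
      then show False using sq_mod4[of t] less.prems(2) by simp
    qed
  qed
qed

lemma gen_facts:
  assumes "generating_triple \<alpha> p q k"
  shows "cos \<alpha> * p - sin \<alpha> * q = k + 1/2"
    "cos \<alpha> * q + sin \<alpha> * p = triple_lambda p q k"
    "(triple_lambda p q k)^2 = real_of_int (p^2+q^2) - (k+1/2)^2"
    "triple_lambda p q k > 0"
proof -
  have e: "cis \<alpha> * Complex (of_int p) (of_int q) = Complex (of_int k + 1/2) (triple_lambda p q k)"
   and lt: "(of_int k + 1/2)^2 < (of_int (p^2 + q^2) :: real)"
    using assms unfolding generating_triple_def by auto
  show "cos \<alpha> * p - sin \<alpha> * q = k + 1/2" using arg_cong[OF e, of Re] by simp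
  show "cos \<alpha> * q + sin \<alpha> * p = triple_lambda p q k" using arg_cong[OF e, of Im] by (simp add: algebra_simps)
  show "(triple_lambda p q k)^2 = real_of_int (p^2+q^2) - (k+1/2)^2"
    unfolding triple_lambda_def using lt by simp
  show "triple_lambda p q k > 0" unfolding triple_lambda_def using lt by simp
qed

lemma re_case:
  assumes prim: "primary_triple \<alpha> p q k"
    and re: "Re (cis \<alpha> * Complex (of_int a) (of_int b)) = of_int n + 1/2"
  shows "\<exists>m::int. odd m \<and> a = m*p \<and> b = m*q"
proof -
  have gen: "generating_triple \<alpha> p q k" using prim unfolding primary_triple_def by auto
  define co where "co = cos \<alpha>"
  define si where "si = sin \<alpha>"
  define L where "L = triple_lambda p q k"
  define N where "N = p^2 + q^2"
  note g = gen_facts[OF gen, folded co_def si_def L_def]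
  have lt: "(of_int k + 1/2)^2 < (of_int N :: real)" using gen unfolding generating_triple_def N_def by auto
  have Npos: "N > 0"
  proof -
    have "(0::real) < of_int N" using lt by (smt (verit) zero_le_power2)
    then show ?thesis by simp
  qed
  have reeq: "co*a - si*b = n + 1/2" using re by (simp add: co_def si_def)
  define c1 where "c1 = a*p + b*q"
  define c2 where "c2 = b*p - a*q"
  have ident: "real_of_int N * (co*a - si*b) = (co*p - si*q)*c1 - (co*q+si*p)*c2"
    unfolding N_def c1_def c2_def by (simp add: algebra_simps power2_eq_square)
  then have "real_of_int N * (n + 1/2) = (k+1/2)*c1 - L*c2" using g reeq by simp
  then have t: "2*L*c2 = real_of_int ((2*k+1)*c1 - N*(2*n+1))" by (simp add: algebra_simps)
  define t where "t = (2*k+1)*c1 - N*(2*n+1)"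
  have "real_of_int (t^2) = (2*L*c2)^2" using t t_def by simp
  also have "\<dots> = 4*L^2*c2^2" by (simp add: power2_eq_square)
  also have "\<dots> = 4*(real_of_int N - (k+1/2)^2)*c2^2" using g(3) N_def by simp
  also have "\<dots> = real_of_int ((4*N - (2*k+1)^2) * c2^2)"
    by (simp add: algebra_simps power2_eq_square)
  finally have "t^2 = (4*N - (2*k+1)^2) * c2^2" by linarith
  moreover have "(4*N - (2*k+1)^2) mod 4 = 3"
  proof -
    have "4*N - (2*k+1)^2 = 4*(N - k^2 - k - 1) + 3" by (simp add: algebra_simps power2_eq_square)
    moreover have "(4*x+3::int) mod 4 = 3" for x by presburger
    ultimately show ?thesis by metis
  qed
  ultimately have c20: "c2 = 0" using nosq by blast
  then have bp: "b*p = a*q" unfolding c2_def by simp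
  have "real_of_int N * (n + 1/2) = (k+1/2)*c1" using \<open>real_of_int N * (n + 1/2) = (k+1/2)*c1 - L*c2\<close> c20 by simp
  then have c1eq: "c1 * (2*k+1) = N*(2*n+1)"
  proof -
    assume "real_of_int N * (n + 1/2) = (k+1/2)*c1"
    then have "real_of_int (c1 * (2*k+1)) = real_of_int (N*(2*n+1))" by (simp add: algebra_simps)
    then show ?thesis by linarith
  qed
  have aN: "a*N = p*c1" unfolding N_def c1_def using bp by (simp add: algebra_simps power2_eq_square)
  have bN: "b*N = q*c1" unfolding N_def c1_def using bp by (simp add: algebra_simps power2_eq_square)
  have "((2*k+1)*a)*N = ((2*n+1)*p)*N" using aN c1eq by (metis mult.assoc mult.commute)
  then have ea: "(2*k+1)*a = (2*n+1)*p" using Npos by simp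
  have "((2*k+1)*b)*N = ((2*n+1)*q)*N" using bN c1eq by (metis mult.assoc mult.commute)
  then have eb: "(2*k+1)*b = (2*n+1)*q" using Npos by simp
  define gg where "gg = gcd (2*k+1) (2*n+1)"
  have gg0: "gg \<noteq> 0" unfolding gg_def by (simp add: gcd_eq_0_iff; presburger)
  obtain K where K: "2*k+1 = gg*K" unfolding gg_def by (meson dvd_def gcd_dvd1)
  obtain M where M: "2*n+1 = gg*M" unfolding gg_def by (meson dvd_def gcd_dvd2)
  have Kd: "K = (2*k+1) div gg" using K gg0 by simp
  have Md: "M = (2*n+1) div gg" using M gg0 by simp
  have "coprime ((2*k+1) div gcd (2*k+1) (2*n+1)) ((2*n+1) div gcd (2*k+1) (2*n+1))"
    by (rule div_gcd_coprime) presburger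
  then have cop: "coprime K M" unfolding Kd Md gg_def .
  have "K*a = M*p" using ea K M gg0 by (simp add: mult.assoc)
  then have "K dvd M*p" by (metis dvd_triv_left)
  then have Kp: "K dvd p" using cop by (simp add: coprime_dvd_mult_right_iff)
  have "K*b = M*q" using eb K M gg0 by (simp add: mult.assoc)
  then have "K dvd M*q" by (metis dvd_triv_left)
  then have Kq: "K dvd q" using cop by (simp add: coprime_dvd_mult_right_iff)
  define d where "d = \<bar>K\<bar>"
  have K0: "K \<noteq> 0"
  proof
    assume "K = 0"
    with K have "2*k+1 = 0" by simp
    then show False by presburger
  qed
  have d1: "d \<ge> 1" using K0 unfolding d_def by simp
  obtain p' where p': "p = d*p'" using Kp unfolding d_def by (metis abs_dvd_iff dvd_def)
  obtain q' where q': "q = d*q'" using Kq unfolding d_def by (metis abs_dvd_iff dvd_def)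
  have "odd (gg*K)" unfolding K[symmetric] by simp
  then have oddK: "odd K" and oddgg: "odd gg" by (metis even_mult_iff)+
  have "odd (gg*M)" unfolding M[symmetric] by simp
  then have oddM: "odd M" by (metis even_mult_iff)
  define j where "j = gg * sgn K"
  have dj: "2*k+1 = d*j"
  proof -
    have "d*j = gg*(sgn K * \<bar>K\<bar>)" unfolding d_def j_def by (simp add: algebra_simps)
    also have "\<dots> = gg*K" by (simp add: sgn_mult_abs)
    finally show ?thesis using K by simp
  qed
  have oddj: "odd j" unfolding j_def using oddgg K0 by (simp add: sgn_if)
  define k' where "k' = (j - 1) div 2"
  have jk: "j = 2*k'+1" unfolding k'_def using oddj by presburger
  have Aeq: "real_of_int k' + 1/2 = (real_of_int k + 1/2) / d"
  proof -
    have "real_of_int (2*k+1) = real_of_int d * real_of_int (2*k'+1)" using dj jk by simp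
    then show ?thesis using d1 by (simp add: field_simps)
  qed
  have Neq: "real_of_int (p'^2+q'^2) = real_of_int (p^2+q^2) / d^2"
    using d1 p' q' by (simp add: field_simps power2_eq_square)
  have lt': "(real_of_int k' + 1/2)^2 < real_of_int (p'^2+q'^2)"
    unfolding Aeq Neq using lt d1 unfolding N_def by (simp add: power_divide divide_strict_right_mono)
  have Leq: "triple_lambda p' q' k' = L / d"
  proof -
    have "triple_lambda p' q' k' = sqrt ((real_of_int (p^2+q^2) - (real_of_int k + 1/2)^2) / d^2)"
      unfolding triple_lambda_def Aeq Neq using d1 by (simp add: power_divide diff_divide_distrib)
    also have "\<dots> = L / d" unfolding L_def triple_lambda_def using d1 by (simp add: real_sqrt_divide)
    finally show ?thesis .
  qed
  have gen': "generating_triple \<alpha> p' q' k'"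
    unfolding generating_triple_def
  proof
    show "(real_of_int k' + 1/2)^2 < real_of_int (p'^2+q'^2)" by (rule lt')
    show "cis \<alpha> * Complex (real_of_int p') (real_of_int q') = Complex (real_of_int k' + 1 / 2) (triple_lambda p' q' k')"
    proof (rule complex_eqI)
      have "co*p' - si*q' = (co*p - si*q)/d" using p' q' d1 by (simp add: field_simps)
      then show "Re (cis \<alpha> * Complex (real_of_int p') (real_of_int q')) = Re (Complex (real_of_int k' + 1 / 2) (triple_lambda p' q' k'))"
        using g(1) Aeq by (simp add: co_def si_def)
      have "co*q' + si*p' = (co*q + si*p)/d" using p' q' d1 by (simp add: field_simps)
      then show "Im (cis \<alpha> * Complex (real_of_int p') (real_of_int q')) = Im (Complex (real_of_int k' + 1 / 2) (triple_lambda p' q' k'))"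
        using g(2) Leq by (simp add: co_def si_def algebra_simps)
    qed
  qed
  have "p^2 + q^2 \<le> p'^2 + q'^2" using prim gen' unfolding primary_triple_def by blast
  then have "d^2 * (p'^2+q'^2) \<le> 1 * (p'^2 + q'^2)" using p' q' by (simp add: power_mult_distrib algebra_simps)
  moreover have "p'^2 + q'^2 > 0" using Npos p' q' unfolding N_def
    by (smt (verit, best) mult_eq_0_iff power2_eq_square zero_le_power2)
  ultimately have "d^2 \<le> 1" using mult_le_cancel_right_pos by blast
  then have dd: "d*d \<le> 1" by (simp add: power2_eq_square)
  have "d*1 \<le> d*d" using d1 by (intro mult_left_mono) auto
  then have "d = 1" using d1 dd by linarith
  then have KK: "K*K = 1" unfolding d_def by (metis abs_mult_self_eq mult_1_right)
  have "a = (K*M)*p"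
  proof -
    have "a = K*K*a" using KK by simp
    also have "\<dots> = K*(M*p)" using \<open>K*a = M*p\<close> by (simp add: mult.assoc)
    finally show ?thesis by (simp add: mult.assoc)
  qed
  moreover have "b = (K*M)*q"
  proof -
    have "b = K*K*b" using KK by simp
    also have "\<dots> = K*(M*q)" using \<open>K*b = M*q\<close> by (simp add: mult.assoc)
    finally show ?thesis by (simp add: mult.assoc)
  qed
  moreover have "odd (K*M)" using oddK oddM by simp
  ultimately show ?thesis by blast
qed

lemma gauss_mult: "gauss_int x \<Longrightarrow> gauss_int y \<Longrightarrow> gauss_int (x*y)"
proof -
  assume "gauss_int x" "gauss_int y"
  then obtain a b c d :: int where "x = Complex a b" "y = Complex c d" unfolding gauss_int_def by blast
  then have "x*y = Complex (of_int (a*c - b*d)) (of_int (a*d + b*c))" by (simp add: complex_eq_iff)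
  then show ?thesis unfolding gauss_int_def by blast
qed

lemma gauss_pow: "gauss_int x \<Longrightarrow> gauss_int (x^n)"
proof (induction n)
  case 0
  have "(1::complex) = Complex (of_int 1) (of_int 0)" by (simp add: complex_eq_iff)
  then show ?case unfolding gauss_int_def by (metis power_0)
next
  case (Suc n) then show ?case by (simp add: gauss_mult)
qed

lemma gauss_i: "gauss_int \<i>"
proof -
  have "\<i> = Complex (of_int 0) (of_int 1)" by (simp add: complex_eq_iff)
  then show ?thesis unfolding gauss_int_def by blast
qed

lemma gauss_nat: "gauss_int (of_nat n)"
proof -
  have "(of_nat n::complex) = Complex (of_int (int n)) (of_int 0)" by (simp add: complex_eq_iff)
  then show ?thesis unfolding gauss_int_def by blast
qed

lemma to_union:
  assumes "odd (m::int)" "Q \<in> {0,1::nat}"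
  shows "of_int m * \<i>^Q * w \<in> (\<Union>Q\<in>{0,1,2,3::nat}. {of_nat (2*l+1) * \<i>^Q * w | l::nat. True})"
proof (cases "m > 0")
  case True
  define l where "l = nat ((m-1) div 2)"
  have h1: "2*((m-1) div 2) + 1 = m" "(m-1) div 2 \<ge> 0" using True assms(1) by presburger+
  have "int (2*l+1) = m" unfolding l_def using h1 by simp
  then have e: "(of_nat (2*l+1)::complex) = of_int m" by (metis of_int_of_nat_eq)
  have "of_int m * \<i>^Q * w \<in> {of_nat (2*l'+1) * \<i>^Q * w | l'::nat. True}" unfolding e[symmetric] by blast
  moreover have "Q \<in> {0,1,2,3}" using assms(2) by auto
  ultimately show ?thesis by (rule UN_I[rotated])
next
  case False
  define l where "l = nat ((-m-1) div 2)"
  have h1: "2*((-m-1) div 2) + 1 = -m" "(-m-1) div 2 \<ge> 0" using False assms(1) by presburger+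
  have "int (2*l+1) = -m" unfolding l_def using h1 by simp
  then have "(of_nat (2*l+1)::complex) = of_int (- m)" by (metis of_int_of_nat_eq)
  then have e: "(of_nat (2*l+1)::complex) = - of_int m" by simp
  have "of_int m * \<i>^Q * w = of_nat (2*l+1) * \<i>^(Q+2) * w" unfolding e by (simp add: power_add)
  then have "of_int m * \<i>^Q * w \<in> {of_nat (2*l'+1) * \<i>^(Q+2) * w | l'::nat. True}" by blast
  moreover have "Q+2 \<in> {0,1,2,3}" using assms(2) by auto
  ultimately show ?thesis by (rule UN_I[rotated])
qed

theorem mainTheorem6:
  fixes \<alpha> :: real and p q k :: int
  assumes "hinge_angle \<alpha>"
    and "primary_triple \<alpha> p q k"
  shows "source_points \<alpha> =
    (\<Union>Q\<in>{0,1,2,3::nat}. {of_nat (2*l+1) * \<i>^Q * Complex (of_int p) (of_int q) | l::nat. True})"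
proof
  show "source_points \<alpha> \<subseteq> (\<Union>Q\<in>{0,1,2,3::nat}. {of_nat (2*l+1) * \<i>^Q * Complex (of_int p) (of_int q) | l::nat. True})"
  proof
    fix z assume "z \<in> source_points \<alpha>"
    then obtain a b :: int where z: "z = Complex a b" and h: "cis \<alpha> * z \<in> hinge_set"
      unfolding source_points_def gauss_int_def by blast
    from h consider n::int where "Re (cis \<alpha> * z) = n + 1/2" | n::int where "Im (cis \<alpha> * z) = n + 1/2"
      unfolding hinge_set_def by blast
    then show "z \<in> (\<Union>Q\<in>{0,1,2,3::nat}. {of_nat (2*l+1) * \<i>^Q * Complex (of_int p) (of_int q) | l::nat. True})"
    proof cases
      case (1 n)
      have "Re (cis \<alpha> * Complex (of_int a) (of_int b)) = of_int n + 1/2" using 1 z by simp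
      then obtain m where m: "odd m" "a = m*p" "b = m*q" using re_case[OF assms(2)] by blast
      have "z = of_int m * \<i>^0 * Complex (of_int p) (of_int q)"
        unfolding z m(2,3) by (simp add: complex_eq_iff)
      then show ?thesis using to_union[OF m(1), of 0] by simp
    next
      case (2 n)
      have "Re (cis \<alpha> * Complex (of_int b) (of_int (-a))) = Im (cis \<alpha> * Complex (of_int a) (of_int b))"
        by (simp add: algebra_simps)
      then have "Re (cis \<alpha> * Complex (of_int b) (of_int (-a))) = of_int n + 1/2" using 2 z by simp
      then obtain m where m: "odd m" "b = m*p" "-a = m*q" using re_case[OF assms(2)] by blast
      have am: "a = -(m*q)" using m(3) by simp
      have "z = of_int m * \<i>^1 * Complex (of_int p) (of_int q)"
        unfolding z am m(2) by (simp add: complex_eq_iff)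
      then show ?thesis using to_union[OF m(1), of 1] by simp
    qed
  qed
next
  show "(\<Union>Q\<in>{0,1,2,3::nat}. {of_nat (2*l+1) * \<i>^Q * Complex (of_int p) (of_int q) | l::nat. True}) \<subseteq> source_points \<alpha>"
  proof
    fix z assume "z \<in> (\<Union>Q\<in>{0,1,2,3::nat}. {of_nat (2*l+1) * \<i>^Q * Complex (of_int p) (of_int q) | l::nat. True})"
    then obtain Q l where Q: "Q \<in> {0,1,2,3::nat}" and z: "z = of_nat (2*l+1) * \<i>^Q * Complex (of_int p) (of_int q)"
      by blast
    have gen: "generating_triple \<alpha> p q k" using assms(2) unfolding primary_triple_def by auto
    define L where "L = triple_lambda p q k"
    have e: "cis \<alpha> * Complex (of_int p) (of_int q) = Complex (of_int k + 1/2) L"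
      using gen unfolding generating_triple_def L_def by auto
    have "gauss_int (Complex (of_int p) (of_int q))" unfolding gauss_int_def by blast
    then have gz: "gauss_int z" unfolding z
      by (intro gauss_mult gauss_pow gauss_nat gauss_i)
    have cz: "cis \<alpha> * z = of_nat (2*l+1) * \<i>^Q * Complex (of_int k + 1/2) L"
      unfolding z e[symmetric] by (simp only: mult.assoc mult.left_commute)
    define n where "n = (2*int l+1)*k + int l"
    have half: "real (2*l+1) * (of_int k + 1/2) = of_int n + 1/2" unfolding n_def by (simp add: algebra_simps)
    have half2: "- (real (2*l+1) * (of_int k + 1/2)) = of_int (-n-1) + 1/2" using half by simp
    have "cis \<alpha> * z \<in> hinge_set"
      using Q
    proof (elim insertE emptyE)
      assume "Q = 0"
      then have "Re (cis \<alpha> * z) = of_int n + 1/2" using cz half by simp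
      then show ?thesis unfolding hinge_set_def by blast
    next
      assume "Q = 1"
      then have "Im (cis \<alpha> * z) = of_int n + 1/2" using cz half by simp
      then show ?thesis unfolding hinge_set_def by blast
    next
      assume "Q = 2"
      then have "Re (cis \<alpha> * z) = - (real (2*l+1) * (of_int k + 1/2))" unfolding cz by (simp add: power2_eq_square algebra_simps)
      then have "Re (cis \<alpha> * z) = of_int (-n-1) + 1/2" using half2 by simp
      then show ?thesis unfolding hinge_set_def by blast
    next
      assume "Q = 3"
      then have "Im (cis \<alpha> * z) = - (real (2*l+1) * (of_int k + 1/2))" unfolding cz by (simp add: power3_eq_cube algebra_simps)
      then have "Im (cis \<alpha> * z) = of_int (-n-1) + 1/2" using half2 by simp
      then show ?thesis unfolding hinge_set_def by blast
    qed
    then show "z \<in> source_points \<alpha>" using gz unfolding source_points_def by blast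
  qed
qed

end
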